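(* Let $n,m$ be positive integers and $\alpha_1,\dots,\alpha_n$ the simple roots of type $A_n$. There exists a bijection $\varphi_n:\mathcal{R}^m_n\to\mathcal{P}^m_n$ such that for every $i\in\{1,\dots,n\}$ and every $R\in\mathcal{R}^m_n$, the hyperplane $H_{\alpha_i,m}$ is a separating wall of $R$ if and only if the $i$-th part of the partition $\varphi_n(R)$ equals $(n-i+1)m$.
   Context: Type $A_n$: $V=\{x\in\mathbb{R}^{n+1}:\sum x_i=0\}$ with standard inner product; positive roots $\alpha_{ij}=\varepsilon_i-\varepsilon_{j+1}$ ($1\le i\le j\le n$), simple roots $\alpha_i=\varepsilon_i-\varepsilon_{i+1}$. $H_{\alpha,k}=\{v\in V:\langle v,\alpha\rangle=k\}$. $\mathrm{Cat}^m(A_n)$ is the arrangement of the $H_{\alpha,k}$, $\alpha$ positive, $0\le k\le m$. $\mathcal{R}^m_n$ is the set of dominant regions (connected components of the complement contained in $\{v:\langle v,\alpha\rangle\ge 0\ \forall\alpha>0\}$). A separating wall of a region $R$ is a hyperplane of the arrangement supporting a facet of $R$ such that $R$ and the origin lie on different sides of it. $\mathcal{P}^m_n$ is the set of integer partitions $\lambda=(\lambda_1,\dots,\lambda_n)$ with $\lambda_1\ge\lambda_2\ge\cdots\ge\lambda_n\ge0$ and $\lambda_i\le m(n-i+1)$ for all $i$. *)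

theory Defs
  imports "HOL-Analysis.Analysis"
begin

text \<open>Vectors of R^(n+1) are modelled as functions nat => real,
  with coordinates indexed 1..n+1 (coordinates outside 1..n+1 are 0).
  The topology is the product topology on nat => real (which on the
  finite-support subspace V agrees with the Euclidean topology).\<close>

definition V :: "nat \<Rightarrow> (nat \<Rightarrow> real) set" where
  "V n = {x. (\<forall>i. i \<notin> {1..n+1} \<longrightarrow> x i = 0) \<and> (\<Sum>i=1..n+1. x i) = 0}"

definition ip :: "nat \<Rightarrow> (nat \<Rightarrow> real) \<Rightarrow> (nat \<Rightarrow> real) \<Rightarrow> real" where
  "ip n v a = (\<Sum>k=1..n+1. v k * a k)"

definition eps :: "nat \<Rightarrow> nat \<Rightarrow> real" where
  "eps i = (\<lambda>k. if k = i then 1 else 0)"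

definition alpha :: "nat \<Rightarrow> nat \<Rightarrow> nat \<Rightarrow> real" where
  "alpha i j = (\<lambda>k. eps i k - eps (j+1) k)"

definition simple_root :: "nat \<Rightarrow> nat \<Rightarrow> real" where
  "simple_root i = alpha i i"

definition pos_roots :: "nat \<Rightarrow> (nat \<Rightarrow> real) set" where
  "pos_roots n = {alpha i j | i j. 1 \<le> i \<and> i \<le> j \<and> j \<le> n}"

definition hyp :: "nat \<Rightarrow> (nat \<Rightarrow> real) \<Rightarrow> real \<Rightarrow> (nat \<Rightarrow> real) set" where
  "hyp n a k = {v \<in> V n. ip n v a = k}"

definition cat_arr :: "nat \<Rightarrow> nat \<Rightarrow> (nat \<Rightarrow> real) set set" where
  "cat_arr n m = {hyp n a (real k) | a k. a \<in> pos_roots n \<and> k \<le> m}"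

definition complement :: "nat \<Rightarrow> nat \<Rightarrow> (nat \<Rightarrow> real) set" where
  "complement n m = V n - \<Union>(cat_arr n m)"

definition dominant_cone :: "nat \<Rightarrow> (nat \<Rightarrow> real) set" where
  "dominant_cone n = {v \<in> V n. \<forall>a \<in> pos_roots n. ip n v a \<ge> 0}"

definition dom_regions :: "nat \<Rightarrow> nat \<Rightarrow> (nat \<Rightarrow> real) set set" where
  "dom_regions n m = {R. \<exists>x \<in> complement n m.
       R = connected_component_set (complement n m) x \<and> R \<subseteq> dominant_cone n}"

definition aff_hull :: "(nat \<Rightarrow> real) set \<Rightarrow> (nat \<Rightarrow> real) set" where
  "aff_hull S = {x. \<exists>F u. finite F \<and> F \<noteq> {} \<and> F \<subseteq> S \<and> sum u F = 1 \<and>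
                         x = (\<lambda>k. \<Sum>y\<in>F. u y * y k)}"

text \<open>H supports a facet of R: H \<inter> closure R affinely spans H (has codimension 1 in V).\<close>
definition sep_wall :: "nat \<Rightarrow> nat \<Rightarrow> (nat \<Rightarrow> real) set \<Rightarrow> (nat \<Rightarrow> real) set \<Rightarrow> bool" where
  "sep_wall n m R H \<longleftrightarrow> H \<in> cat_arr n m \<and> aff_hull (H \<inter> closure R) = H \<and>
     (\<exists>a k. a \<in> pos_roots n \<and> H = hyp n a k \<and>
        (\<forall>x \<in> R. (ip n x a - k) * (ip n (\<lambda>_. 0) a - k) < 0))"

definition partitions :: "nat \<Rightarrow> nat \<Rightarrow> (nat \<Rightarrow> nat) set" where
  "partitions n m = {lam. (\<forall>i. i \<notin> {1..n} \<longrightarrow> lam i = 0) \<and>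
      (\<forall>i j. 1 \<le> i \<and> i \<le> j \<and> j \<le> n \<longrightarrow> lam j \<le> lam i) \<and>
      (\<forall>i \<in> {1..n}. lam i \<le> m * (n - i + 1))}"

end

theory Submission
  imports Defs
begin


lemma ip_alpha:
  assumes "1 \<le> p" "p \<le> q" "q \<le> n"
  shows "ip n v (alpha p q) = v p - v (q+1)"
proof -
  have "ip n v (alpha p q) = (\<Sum>k=1..n+1. v k * eps p k) - (\<Sum>k=1..n+1. v k * eps (q+1) k)"
    unfolding ip_def alpha_def by (simp add: algebra_simps sum_subtractf)
  also have "\<dots> = v p - v (q+1)"
    using assms unfolding eps_def by (simp add: if_distrib cong: if_cong)
  finally show ?thesis .
qed

lemma pos_roots_iff: "a \<in> pos_roots n \<longleftrightarrow> (\<exists>p b. 1 \<le> p \<and> p < b \<and> b \<le> n+1 \<and> a = alpha p (b-1))"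
proof
  assume "a \<in> pos_roots n"
  then obtain i j where "a = alpha i j" "1 \<le> i" "i \<le> j" "j \<le> n" unfolding pos_roots_def by blast
  then show "\<exists>p b. 1 \<le> p \<and> p < b \<and> b \<le> n+1 \<and> a = alpha p (b-1)"
    by (intro exI[of _ i] exI[of _ "j+1"]) simp
next
  assume "\<exists>p b. 1 \<le> p \<and> p < b \<and> b \<le> n+1 \<and> a = alpha p (b-1)"
  then obtain p b where "1 \<le> p" "p < b" "b \<le> n+1" "a = alpha p (b-1)" by blast
  then show "a \<in> pos_roots n" unfolding pos_roots_def by force
qed

lemma ip_alpha': "1 \<le> p \<Longrightarrow> p < b \<Longrightarrow> b \<le> n+1 \<Longrightarrow> ip n v (alpha p (b-1)) = v p - v b"
  using ip_alpha[of p "b-1" n v] by simp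

definition gen :: "nat \<Rightarrow> nat \<Rightarrow> (nat \<Rightarrow> real) \<Rightarrow> bool" where
  "gen n m x \<longleftrightarrow> (\<forall>a b t. 1 \<le> a \<and> a < b \<and> b \<le> n+1 \<and> t \<le> m \<longrightarrow> x a - x b \<noteq> real t)"

lemma union_cat_iff: "x \<in> \<Union>(cat_arr n m) \<longleftrightarrow> x \<in> V n \<and> \<not> gen n m x"
proof
  assume "x \<in> \<Union>(cat_arr n m)"
  then obtain a k where ak: "a \<in> pos_roots n" "k \<le> m" "x \<in> hyp n a (real k)"
    unfolding cat_arr_def by blast
  then obtain p b where pb: "1 \<le> p" "p < b" "b \<le> n+1" "a = alpha p (b-1)" using pos_roots_iff by blast
  have "x \<in> V n" "ip n x a = real k" using ak unfolding hyp_def by auto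
  moreover have "ip n x a = x p - x b" using pb ip_alpha' by simp
  ultimately have "x p - x b = real k" by simp
  then show "x \<in> V n \<and> \<not> gen n m x" unfolding gen_def using pb ak(2) \<open>x \<in> V n\<close> by blast
next
  assume A: "x \<in> V n \<and> \<not> gen n m x"
  then obtain p b t where pb: "1 \<le> p" "p < b" "b \<le> n+1" "t \<le> m" "x p - x b = real t"
    unfolding gen_def by blast
  have "alpha p (b-1) \<in> pos_roots n" using pb pos_roots_iff by blast
  moreover have "x \<in> hyp n (alpha p (b-1)) (real t)" using A pb ip_alpha' unfolding hyp_def by simp
  ultimately show "x \<in> \<Union>(cat_arr n m)" unfolding cat_arr_def using pb(4) by blast
qed

lemma complement_iff: "x \<in> complement n m \<longleftrightarrow> x \<in> V n \<and> gen n m x"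
  unfolding complement_def using union_cat_iff by blast

lemma dominant_iff: "x \<in> dominant_cone n \<longleftrightarrow> x \<in> V n \<and> (\<forall>a b. 1 \<le> a \<and> a < b \<and> b \<le> n+1 \<longrightarrow> x b \<le> x a)"
proof -
  have "(\<forall>a\<in>pos_roots n. 0 \<le> ip n x a) \<longleftrightarrow> (\<forall>a b. 1 \<le> a \<and> a < b \<and> b \<le> n+1 \<longrightarrow> x b \<le> x a)"
  proof
    assume H: "\<forall>a\<in>pos_roots n. 0 \<le> ip n x a"
    show "\<forall>a b. 1 \<le> a \<and> a < b \<and> b \<le> n+1 \<longrightarrow> x b \<le> x a"
    proof (intro allI impI)
      fix a b assume "1 \<le> a \<and> a < b \<and> b \<le> n+1"
      then have "alpha a (b-1) \<in> pos_roots n" "ip n x (alpha a (b-1)) = x a - x b"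
        using pos_roots_iff ip_alpha' by blast+
      then show "x b \<le> x a" using H by force
    qed
  next
    assume H: "\<forall>a b. 1 \<le> a \<and> a < b \<and> b \<le> n+1 \<longrightarrow> x b \<le> x a"
    show "\<forall>a\<in>pos_roots n. 0 \<le> ip n x a"
    proof
      fix r assume "r \<in> pos_roots n"
      then obtain a b where "1 \<le> a" "a < b" "b \<le> n+1" "r = alpha a (b-1)" using pos_roots_iff by blast
      then show "0 \<le> ip n x r" using H ip_alpha' by force
    qed
  qed
  then show ?thesis unfolding dominant_cone_def by auto
qed

lemma sign_const:
  fixes f :: "'a::topological_space \<Rightarrow> real"
  assumes "connected S" "continuous_on S f" "\<forall>z\<in>S. f z \<noteq> 0" "a \<in> S" "b \<in> S"
  shows "0 < f a \<longleftrightarrow> 0 < f b"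
proof -
  have c: "connected (f ` S)" using assms connected_continuous_image by blast
  have n0: "0 \<notin> f ` S" using assms(3) by auto
  have fa: "f a \<in> f ` S" and fb: "f b \<in> f ` S" using assms(4,5) by auto
  have iv: "\<And>u v z. u \<in> f ` S \<Longrightarrow> v \<in> f ` S \<Longrightarrow> u \<le> z \<Longrightarrow> z \<le> v \<Longrightarrow> z \<in> f ` S"
    using c unfolding connected_iff_interval by blast
  have 1: "\<not> (0 < f a \<and> f b < 0)"
  proof
    assume "0 < f a \<and> f b < 0"
    then have "(0::real) \<in> f ` S" using iv[OF fb fa, of 0] by simp
    then show False using n0 by blast
  qed
  have 2: "\<not> (0 < f b \<and> f a < 0)"
  proof
    assume "0 < f b \<and> f a < 0"
    then have "(0::real) \<in> f ` S" using iv[OF fa fb, of 0] by simp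
    then show False using n0 by blast
  qed
  have "f a \<noteq> 0" "f b \<noteq> 0" using assms(3,4,5) by auto
  then show ?thesis using 1 2 by linarith
qed

lemma cont_diff: "continuous_on S (\<lambda>z::nat\<Rightarrow>real. z a - z b - c)"
proof -
  have "continuous_on UNIV (\<lambda>z::nat\<Rightarrow>real. z a - z b - c)"
    by (rule continuous_on_diff[OF continuous_on_diff[OF continuous_on_product_coordinates continuous_on_product_coordinates] continuous_on_const])
  then show ?thesis by (rule continuous_on_subset) simp
qed

definition same :: "nat \<Rightarrow> nat \<Rightarrow> (nat \<Rightarrow> real) \<Rightarrow> (nat \<Rightarrow> real) \<Rightarrow> bool" where
  "same n m x y \<longleftrightarrow> (\<forall>a b t. 1 \<le> a \<and> a < b \<and> b \<le> n+1 \<and> t \<le> m \<longrightarrow>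
      (real t < x a - x b \<longleftrightarrow> real t < y a - y b))"

lemma V_comb:
  assumes "x \<in> V n" "y \<in> V n"
  shows "(\<lambda>k. (1-s) * x k + s * y k) \<in> V n"
proof -
  have "(\<Sum>i=1..n+1. (1-s) * x i + s * y i) = (1-s) * (\<Sum>i=1..n+1. x i) + s * (\<Sum>i=1..n+1. y i)"
    by (simp only: sum.distrib flip: sum_distrib_left)
  then show ?thesis using assms unfolding V_def by auto
qed

lemma conv_pos:
  fixes s u v :: real
  assumes "0 \<le> s" "s \<le> 1" "0 < u" "0 < v"
  shows "0 < (1-s) * u + s * v"
proof (cases "s = 0")
  case True then show ?thesis using assms by simp
next
  case False
  have "0 \<le> (1-s) * u" using assms by simp
  moreover have "0 < s * v" using assms False by simp
  ultimately show ?thesis by linarith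
qed

lemma comp_char:
  assumes x: "x \<in> complement n m"
  shows "y \<in> connected_component_set (complement n m) x \<longleftrightarrow> y \<in> complement n m \<and> same n m x y"
proof
  let ?C = "connected_component_set (complement n m) x"
  assume y: "y \<in> ?C"
  have xC: "x \<in> ?C" using x by simp
  have sub: "?C \<subseteq> complement n m" by (rule connected_component_subset)
  have "same n m x y" unfolding same_def
  proof (intro allI impI)
    fix a b t assume abt: "1 \<le> a \<and> a < b \<and> b \<le> n+1 \<and> t \<le> m"
    have nz: "\<forall>z\<in>?C. z a - z b - real t \<noteq> 0"
    proof
      fix z assume "z \<in> ?C"
      then have "gen n m z" using sub by (simp add: subset_iff complement_iff)
      then show "z a - z b - real t \<noteq> 0" using abt unfolding gen_def by auto
    qed
    have "0 < x a - x b - real t \<longleftrightarrow> 0 < y a - y b - real t"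
      by (rule sign_const[OF connected_connected_component cont_diff nz xC y])
    then show "real t < x a - x b \<longleftrightarrow> real t < y a - y b" by simp
  qed
  then show "y \<in> complement n m \<and> same n m x y" using y sub by blast
next
  assume y: "y \<in> complement n m \<and> same n m x y"
  have xV: "x \<in> V n" and gx: "gen n m x" using x by (simp_all add: complement_iff)
  have yV: "y \<in> V n" and gy: "gen n m y" and sy: "same n m x y" using y by (simp_all add: complement_iff)
  define p where "p = (\<lambda>s::real. \<lambda>k. (1-s) * x k + s * y k)"
  have cp: "continuous_on {0..1} p" unfolding p_def
    by (intro continuous_on_coordinatewise_then_product continuous_intros)
  have conn: "connected (p ` {0..1})"
    by (rule connected_continuous_image[OF cp connected_Icc])
  have xin: "x \<in> p ` {0..1}" by (rule image_eqI[of _ _ 0]) (auto simp: p_def)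
  have yin: "y \<in> p ` {0..1}" by (rule image_eqI[of _ _ 1]) (auto simp: p_def)
  have subc: "p ` {0..1} \<subseteq> complement n m"
  proof
    fix z assume "z \<in> p ` {0..1}"
    then obtain s where s: "0 \<le> s" "s \<le> 1" "z = p s" by auto
    have "z \<in> V n" unfolding s(3) p_def by (rule V_comb[OF xV yV])
    moreover have "gen n m z" unfolding gen_def
    proof (intro allI impI)
      fix a b t assume abt: "1 \<le> a \<and> a < b \<and> b \<le> n+1 \<and> t \<le> m"
      have zd: "z a - z b = (1-s) * (x a - x b) + s * (y a - y b)"
        using s by (simp add: p_def algebra_simps)
      have nx: "x a - x b \<noteq> real t" and ny: "y a - y b \<noteq> real t"
        using gx gy abt unfolding gen_def by blast+
      have eq: "real t < x a - x b \<longleftrightarrow> real t < y a - y b"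
        using sy abt unfolding same_def by blast
      have zd2: "z a - z b - real t = (1-s) * (x a - x b - real t) + s * (y a - y b - real t)"
        unfolding zd by (simp add: algebra_simps)
      show "z a - z b \<noteq> real t"
      proof (cases "real t < x a - x b")
        case True
        then have "0 < x a - x b - real t" "0 < y a - y b - real t" using eq by auto
        then have "0 < z a - z b - real t" unfolding zd2 using conv_pos s by blast
        then show ?thesis by simp
      next
        case False
        then have "0 < real t - (x a - x b)" "0 < real t - (y a - y b)" using eq nx ny by auto
        then have "0 < (1-s) * (real t - (x a - x b)) + s * (real t - (y a - y b))" using conv_pos s by blast
        then have "z a - z b - real t < 0" unfolding zd2 by (simp add: algebra_simps)
        then show ?thesis by simp
      qed
    qed
    ultimately show "z \<in> complement n m" by (simp add: complement_iff)
  qed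
  then show "y \<in> connected_component_set (complement n m) x"
  proof -
    have "p ` {0..1} \<subseteq> connected_component_set (complement n m) x"
      by (rule connected_component_maximal[OF xin conn subc])
    then show ?thesis using yin by (rule subsetD)
  qed
qed



definition G :: "nat \<Rightarrow> nat \<Rightarrow> (nat \<Rightarrow> real) set" where
  "G n m = {x \<in> complement n m. \<forall>a b. 1 \<le> a \<and> a < b \<and> b \<le> n+1 \<longrightarrow> x b < x a}"

abbreviation comp where "comp n m x \<equiv> connected_component_set (complement n m) x"

lemma comp_G:
  assumes x: "x \<in> G n m" and y: "y \<in> comp n m x"
  shows "y \<in> G n m" "same n m x y"
proof -
  have xc: "x \<in> complement n m" using x by (simp add: G_def)
  have yc: "y \<in> complement n m" and s: "same n m x y" using comp_char[OF xc] y by auto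
  show "same n m x y" by fact
  have "\<forall>a b. 1 \<le> a \<and> a < b \<and> b \<le> n+1 \<longrightarrow> y b < y a"
  proof (intro allI impI)
    fix a b assume ab: "1 \<le> a \<and> a < b \<and> b \<le> n+1"
    have "0 < x a - x b" using x ab by (simp add: G_def)
    then have "real 0 < y a - y b" using s ab unfolding same_def by (metis of_nat_0 zero_le)
    then show "y b < y a" by simp
  qed
  then show "y \<in> G n m" using yc by (simp add: G_def)
qed

lemma comp_eq:
  assumes x: "x \<in> G n m" and y: "y \<in> G n m" and s: "same n m x y"
  shows "comp n m x = comp n m y"
proof -
  have xc: "x \<in> complement n m" and yc: "y \<in> complement n m" using x y by (simp_all add: G_def)
  have "y \<in> comp n m x" using comp_char[OF xc] yc s by blast
  then show ?thesis by (rule connected_component_eq[symmetric])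
qed

lemma dom_regions_iff: "R \<in> dom_regions n m \<longleftrightarrow> (\<exists>x \<in> G n m. R = comp n m x)"
proof
  assume "R \<in> dom_regions n m"
  then obtain x where x: "x \<in> complement n m" "R = comp n m x" "R \<subseteq> dominant_cone n"
    unfolding dom_regions_def by blast
  have "x \<in> R" using x by simp
  then have d: "x \<in> dominant_cone n" using x by blast
  have "\<forall>a b. 1 \<le> a \<and> a < b \<and> b \<le> n+1 \<longrightarrow> x b < x a"
  proof (intro allI impI)
    fix a b assume ab: "1 \<le> a \<and> a < b \<and> b \<le> n+1"
    have "x b \<le> x a" using d ab by (simp add: dominant_iff)
    moreover have "x a - x b \<noteq> real 0" using x(1) ab by (simp add: complement_iff gen_def del: of_nat_0)
    ultimately show "x b < x a" by simp
  qed
  then have "x \<in> G n m" using x(1) by (simp add: G_def)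
  then show "\<exists>x \<in> G n m. R = comp n m x" using x by blast
next
  assume "\<exists>x \<in> G n m. R = comp n m x"
  then obtain x where x: "x \<in> G n m" "R = comp n m x" by blast
  have xc: "x \<in> complement n m" using x by (simp add: G_def)
  have "R \<subseteq> dominant_cone n"
  proof
    fix y assume "y \<in> R"
    then have "y \<in> G n m" using comp_G x by blast
    then show "y \<in> dominant_cone n" by (auto simp: G_def dominant_iff complement_iff less_imp_le)
  qed
  then show "R \<in> dom_regions n m" unfolding dom_regions_def using xc x by blast
qed

definition Sx :: "nat \<Rightarrow> nat \<Rightarrow> (nat \<Rightarrow> real) \<Rightarrow> nat \<Rightarrow> (nat \<times> nat) set" where
  "Sx n m x i = {(j,t). i < j \<and> j \<le> n+1 \<and> 1 \<le> t \<and> t \<le> m \<and> real t < x i - x j}"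

definition lam :: "nat \<Rightarrow> nat \<Rightarrow> (nat \<Rightarrow> real) \<Rightarrow> nat \<Rightarrow> nat" where
  "lam n m x = (\<lambda>i. if i \<in> {1..n} then card (Sx n m x i) else 0)"

lemma Sx_sub: "Sx n m x i \<subseteq> {i+1..n+1} \<times> {1..m}"
  unfolding Sx_def by auto

lemma Sx_fin: "finite (Sx n m x i)"
  by (rule finite_subset[OF Sx_sub]) simp

lemma same_Sx:
  assumes "same n m x y" "1 \<le> i"
  shows "Sx n m x i = Sx n m y i"
  using assms unfolding Sx_def same_def by auto

lemma same_lam: "same n m x y \<Longrightarrow> lam n m x = lam n m y"
  unfolding lam_def using same_Sx by (auto intro!: ext)

lemma lam_part:
  assumes x: "x \<in> G n m"
  shows "lam n m x \<in> partitions n m"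
proof -
  have mono: "lam n m x j \<le> lam n m x i" if ij: "1 \<le> i" "i \<le> j" "j \<le> n" for i j
  proof -
    have "Sx n m x j \<subseteq> Sx n m x i"
    proof
      fix p assume "p \<in> Sx n m x j"
      then obtain k t where p: "p = (k,t)" "j < k" "k \<le> n+1" "1 \<le> t" "t \<le> m" "real t < x j - x k"
        unfolding Sx_def by auto
      have "x j \<le> x i"
      proof (cases "i = j")
        case False then show ?thesis using x ij by (auto simp: G_def intro: less_imp_le)
      qed simp
      then show "p \<in> Sx n m x i" using p ij unfolding Sx_def by auto
    qed
    then show ?thesis using ij Sx_fin unfolding lam_def by (simp add: card_mono)
  qed
  have bound: "lam n m x i \<le> m * (n - i + 1)" if "i \<in> {1..n}" for i
  proof -
    have "card (Sx n m x i) \<le> card ({i+1..n+1} \<times> {1..m})"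
      by (rule card_mono[OF _ Sx_sub]) simp
    also have "\<dots> = m * (n - i + 1)" using that by (simp add: card_cartesian_product Suc_diff_le algebra_simps)
    finally show ?thesis using that unfolding lam_def by simp
  qed
  show ?thesis unfolding partitions_def using mono bound
    by (auto simp: lam_def)
qed



definition Qs :: "nat \<Rightarrow> nat \<Rightarrow> (nat \<Rightarrow> real) \<Rightarrow> (nat \<Rightarrow> real) \<Rightarrow> nat \<Rightarrow> bool" where
  "Qs n m x y i \<longleftrightarrow> (\<forall>a b t. i \<le> a \<and> a < b \<and> b \<le> n+1 \<and> t \<le> m \<longrightarrow>
      (real t < x a - x b \<longleftrightarrow> real t < y a - y b))"

lemma G_gen: "x \<in> G n m \<Longrightarrow> 1 \<le> a \<Longrightarrow> a < b \<Longrightarrow> b \<le> n+1 \<Longrightarrow> t \<le> m \<Longrightarrow> x a - x b \<noteq> real t"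
  by (auto simp: G_def complement_iff gen_def)

lemma G_pos: "x \<in> G n m \<Longrightarrow> 1 \<le> a \<Longrightarrow> a < b \<Longrightarrow> b \<le> n+1 \<Longrightarrow> x b < x a"
  by (auto simp: G_def)

lemma row_key:
  assumes x: "x \<in> G n m" and y: "y \<in> G n m" and i: "1 \<le> i"
    and Q: "Qs n m x y (i+1)"
    and p: "p \<in> Sx n m x i - Sx n m y i" and q: "q \<in> Sx n m y i - Sx n m x i"
  shows False
proof -
  obtain j t where pj: "p = (j,t)" "i < j" "j \<le> n+1" "1 \<le> t" "t \<le> m" "real t < x i - x j"
      "\<not> real t < y i - y j"
    using p unfolding Sx_def by auto
  obtain k s where qk: "q = (k,s)" "i < k" "k \<le> n+1" "1 \<le> s" "s \<le> m" "real s < y i - y k"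
      "\<not> real s < x i - x k"
    using q unfolding Sx_def by auto
  have g1: "x i - x k \<noteq> real s" using G_gen[OF x i qk(2,3,5)] .
  have g2: "y i - y j \<noteq> real t" using G_gen[OF y i pj(2,3,5)] .
  have h1: "x i - x k < real s" using g1 qk(7) by simp
  have h2: "y i - y j < real t" using g2 pj(7) by simp
  consider "j = k" | "j < k" | "k < j" by linarith
  then show False
  proof cases
    case 1 then show False using pj(6) h1 qk(6) h2 by simp
  next
    case 2
    have d1: "x j - x k < real s - real t" using pj(6) h1 by simp
    have d2: "real s - real t < y j - y k" using qk(6) h2 by simp
    have "x k < x j" using G_pos[OF x _ 2 qk(3)] i pj(2) by simp
    then have "t < s" using d1 by simp
    then have c: "real (s - t) = real s - real t" by simp
    have "real (s - t) < y j - y k \<longleftrightarrow> real (s - t) < x j - x k"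
      using Q pj(2) 2 qk(3,5) unfolding Qs_def by (metis Suc_eq_plus1 Suc_leI diff_le_self le_trans)
    then show False using d1 d2 c by simp
  next
    case 3
    have d1: "real t - real s < x k - x j" using pj(6) h1 by simp
    have d2: "y k - y j < real t - real s" using qk(6) h2 by simp
    have "y j < y k" using G_pos[OF y _ 3 pj(3)] i qk(2) by simp
    then have "s < t" using d2 by simp
    then have c: "real (t - s) = real t - real s" by simp
    have "real (t - s) < x k - x j \<longleftrightarrow> real (t - s) < y k - y j"
      using Q qk(2) 3 pj(3,5) unfolding Qs_def by (metis Suc_eq_plus1 Suc_leI diff_le_self le_trans)
    then show False using d1 d2 c by simp
  qed
qed

lemma row_eq:
  assumes x: "x \<in> G n m" and y: "y \<in> G n m" and i: "1 \<le> i"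
    and Q: "Qs n m x y (i+1)" and c: "card (Sx n m x i) = card (Sx n m y i)"
  shows "Sx n m x i = Sx n m y i"
proof (rule ccontr)
  assume ne: "Sx n m x i \<noteq> Sx n m y i"
  have "\<not> Sx n m x i \<subseteq> Sx n m y i"
    using card_subset_eq[OF Sx_fin _ c] ne by blast
  then obtain p where p: "p \<in> Sx n m x i - Sx n m y i" by blast
  have "\<not> Sx n m y i \<subseteq> Sx n m x i"
    using card_subset_eq[OF Sx_fin _ c[symmetric]] ne by blast
  then obtain q where q: "q \<in> Sx n m y i - Sx n m x i" by blast
  show False using row_key[OF x y i Q p q] .
qed

lemma lam_inj:
  assumes x: "x \<in> G n m" and y: "y \<in> G n m" and l: "lam n m x = lam n m y"
  shows "same n m x y"
proof -
  have "\<forall>k. k \<le> n \<longrightarrow> Qs n m x y (n+1-k)"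
  proof (intro allI)
    fix k show "k \<le> n \<longrightarrow> Qs n m x y (n+1-k)"
    proof (induction k)
      case 0 then show ?case unfolding Qs_def by auto
    next
      case (Suc k)
      show ?case
      proof
        assume k: "Suc k \<le> n"
        define i where "i = n - k"
        have i1: "1 \<le> i" "i \<le> n" using k by (auto simp: i_def)
        have Qi1: "Qs n m x y (i+1)" using Suc k unfolding i_def
          by (metis Suc_diff_le Suc_eq_plus1 Suc_leD diff_Suc_Suc le_SucI)
        have ci: "card (Sx n m x i) = card (Sx n m y i)" using l i1 fun_cong[OF l, of i]
          unfolding lam_def by simp
        have S: "Sx n m x i = Sx n m y i" by (rule row_eq[OF x y i1(1) Qi1 ci])
        have "Qs n m x y i" unfolding Qs_def
        proof (intro allI impI)
          fix a b t assume abt: "i \<le> a \<and> a < b \<and> b \<le> n+1 \<and> t \<le> m"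
          show "real t < x a - x b \<longleftrightarrow> real t < y a - y b"
          proof (cases "a = i")
            case False
            then show ?thesis using Qi1 abt unfolding Qs_def by auto
          next
            case True
            show ?thesis
            proof (cases "t = 0")
              case True
              then show ?thesis using G_pos[OF x, of a b] G_pos[OF y, of a b] abt i1 by auto
            next
              case False
              then have "(b,t) \<in> Sx n m x i \<longleftrightarrow> (b,t) \<in> Sx n m y i" using S by simp
              then show ?thesis using False abt \<open>a = i\<close> unfolding Sx_def by auto
            qed
          qed
        qed
        then show "Qs n m x y (n+1 - Suc k)" using k unfolding i_def
          by (metis Suc_diff_le Suc_eq_plus1 diff_Suc_Suc)
      qed
    qed
  qed
  then have "Qs n m x y (n+1-n)" by blast
  then have "Qs n m x y 1" by simp
  then show ?thesis unfolding Qs_def same_def by blast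
qed



lemma card_below_mono:
  fixes K :: "real set"
  assumes "finite K" "k1 \<in> K" "k1 < k2"
  shows "card {k\<in>K. k < k1} < card {k\<in>K. k < k2}"
proof (rule psubset_card_mono)
  show "finite {k\<in>K. k < k2}" using assms by simp
  show "{k\<in>K. k < k1} \<subset> {k\<in>K. k < k2}" using assms by auto
qed

lemma pick:
  fixes K :: "real set"
  assumes fin: "finite K" and z0: "z0 \<notin> K" and r0: "card {k\<in>K. k < z0} \<le> r" and r1: "r \<le> card K"
  shows "\<exists>y. z0 < y \<and> y \<notin> K \<and> card {k\<in>K. k < y} = r"
proof (cases "r = card K")
  case True
  define y where "y = Max (insert z0 K) + 1"
  have "\<forall>k\<in>insert z0 K. k \<le> Max (insert z0 K)" using fin by simp
  then have "\<forall>k\<in>insert z0 K. k < y" unfolding y_def by fastforce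
  then have "{k\<in>K. k < y} = K" "z0 < y" "y \<notin> K" by auto
  then show ?thesis using True by auto
next
  case False
  then have rl: "r < card K" using r1 by simp
  define g where "g = (\<lambda>z. card {k\<in>K. k < z})"
  have inj: "inj_on g K"
  proof (rule inj_onI)
    fix a b assume ab: "a \<in> K" "b \<in> K" "g a = g b"
    show "a = b"
    proof (rule ccontr)
      assume "a \<noteq> b"
      then consider "a < b" | "b < a" by linarith
      then show False
        using card_below_mono[OF fin ab(1), of b] card_below_mono[OF fin ab(2), of a] ab(3)
        unfolding g_def by (cases; simp)
    qed
  qed
  have sub: "g ` K \<subseteq> {..<card K}"
  proof
    fix v assume "v \<in> g ` K"
    then obtain z where z: "z \<in> K" "v = g z" by auto
    have "{k\<in>K. k < z} \<subset> K" using z by auto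
    then show "v \<in> {..<card K}" using z fin unfolding g_def by (simp add: psubset_card_mono)
  qed
  have "g ` K = {..<card K}"
    by (rule card_subset_eq) (use sub inj card_image in auto)
  then obtain z where z: "z \<in> K" "g z = r" using rl by (metis imageE lessThan_iff)
  have zz: "z0 < z"
  proof (rule ccontr)
    assume "\<not> z0 < z"
    then have "z < z0" using z z0 by (cases "z = z0") auto
    then have "g z < card {k\<in>K. k < z0}" using card_below_mono[OF fin z(1)] unfolding g_def by blast
    then show False using z r0 by simp
  qed
  define L where "L = insert z0 {k\<in>K. k < z}"
  have Lf: "finite L" "L \<noteq> {}" using fin unfolding L_def by auto
  define l where "l = Max L"
  have lz: "l < z" unfolding l_def using Lf zz by (auto simp: L_def)
  have kl: "\<And>k. k \<in> K \<Longrightarrow> k < z \<Longrightarrow> k \<le> l" unfolding l_def using Lf by (auto simp: L_def)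
  have z0l: "z0 \<le> l" unfolding l_def using Lf by (auto simp: L_def)
  define y where "y = (l + z) / 2"
  have yl: "l < y" "y < z" using lz unfolding y_def by auto
  have eqs: "{k\<in>K. k < y} = {k\<in>K. k < z}"
  proof
    show "{k\<in>K. k < y} \<subseteq> {k\<in>K. k < z}" using yl by auto
    show "{k\<in>K. k < z} \<subseteq> {k\<in>K. k < y}" using kl yl by fastforce
  qed
  have "y \<notin> K"
  proof
    assume "y \<in> K"
    then have "y \<le> l" using kl yl by simp
    then show False using yl by simp
  qed
  moreover have "z0 < y" using z0l yl by simp
  ultimately show ?thesis using eqs z unfolding g_def by auto
qed

definition Lo :: "nat \<Rightarrow> nat \<Rightarrow> (nat \<Rightarrow> real) \<Rightarrow> nat \<Rightarrow> bool" where
  "Lo n m x i \<longleftrightarrow> (\<forall>a b t. i \<le> a \<and> a < b \<and> b \<le> n+1 \<and> t \<le> m \<longrightarrow> x a - x b \<noteq> real t \<and> x b < x a)"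

lemma Sx_upd:
  assumes "i < i'"
  shows "Sx n m (x(i := y)) i' = Sx n m x i'"
  using assms unfolding Sx_def by auto

lemma step:
  assumes lam: "lam0 \<in> partitions n m" and i: "1 \<le> i" "i \<le> n"
    and lo: "Lo n m x (i+1)" and cx: "card (Sx n m x (i+1)) = lam0 (i+1)"
  shows "\<exists>y. Lo n m (x(i := y)) i \<and> card (Sx n m (x(i := y)) i) = lam0 i"
proof -
  define I where "I = {i+1..n+1} \<times> {1..m}"
  define key where "key = (\<lambda>(j,t). x j + real (t::nat))"
  define K where "K = key ` I"
  have finI: "finite I" unfolding I_def by simp
  have injk: "inj_on key I"
  proof (rule inj_onI)
    fix p q assume pq: "p \<in> I" "q \<in> I" "key p = key q"
    obtain j t where p: "p = (j,t)" "i+1 \<le> j" "j \<le> n+1" "1 \<le> t" "t \<le> m" using pq(1) unfolding I_def by auto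
    obtain k s where q: "q = (k,s)" "i+1 \<le> k" "k \<le> n+1" "1 \<le> s" "s \<le> m" using pq(2) unfolding I_def by auto
    have e: "x j + real t = x k + real s" using pq(3) p q unfolding key_def by simp
    consider "j = k" | "j < k" | "k < j" by linarith
    then show "p = q"
    proof cases
      case 1 then show ?thesis using e p q by simp
    next
      case 2
      have "x k < x j" "x j - x k \<noteq> real (s - t)" using lo p q 2 unfolding Lo_def by auto
      then show ?thesis using e by (cases "s \<le> t") (auto simp: of_nat_diff)
    next
      case 3
      have "x j < x k" "x k - x j \<noteq> real (t - s)" using lo p q 3 unfolding Lo_def by auto
      then show ?thesis using e by (cases "t \<le> s") (auto simp: of_nat_diff)
    qed
  qed
  have finK: "finite K" unfolding K_def using finI by simp
  have cK: "card K = m * (n - i + 1)" unfolding K_def using card_image[OF injk] i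
    by (simp add: I_def card_cartesian_product Suc_diff_le algebra_simps)
  have below: "\<And>y. {k\<in>K. k < y} = key ` {p\<in>I. key p < y}" unfolding K_def by auto
  have cbelow: "\<And>y. card {k\<in>K. k < y} = card {p\<in>I. key p < y}"
    unfolding below by (rule card_image) (rule inj_on_subset[OF injk], auto)
  have setS: "\<And>y. {p\<in>I. key p < y} = Sx n m (x(i := y)) i"
    unfolding I_def key_def Sx_def by (auto simp: algebra_simps)
  have z0: "x (i+1) \<notin> K"
  proof
    assume "x (i+1) \<in> K"
    then obtain j t where jt: "i+1 \<le> j" "j \<le> n+1" "1 \<le> t" "t \<le> m" "x (i+1) = x j + real t"
      unfolding K_def I_def key_def by auto
    show False
    proof (cases "j = i+1")
      case True then show False using jt by simp
    next
      case False
      then have "i+1 < j" using jt by simp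
      then have "x (i+1) - x j \<noteq> real t" using lo jt(2,4) unfolding Lo_def by blast
      then show False using jt by simp
    qed
  qed
  have r0: "card {k\<in>K. k < x (i+1)} = lam0 (i+1)"
  proof -
    have aux: "\<And>a b. Suc i \<le> a \<Longrightarrow> Suc 0 \<le> b \<Longrightarrow> real b + x a < x (Suc i) \<Longrightarrow> Suc i < a"
    proof -
      fix a b assume "Suc i \<le> a" "Suc 0 \<le> b" "real b + x a < x (Suc i)"
      then show "Suc i < a" by (cases "a = Suc i") auto
    qed
    have "{p\<in>I. key p < x (i+1)} = Sx n m x (i+1)"
      unfolding I_def key_def Sx_def by (auto simp: algebra_simps intro: aux)
    then show ?thesis using cbelow cx by simp
  qed
  have lmono: "lam0 (i+1) \<le> lam0 i"
  proof (cases "i+1 \<le> n")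
    case True then show ?thesis using lam i unfolding partitions_def by auto
  next
    case False then have "lam0 (i+1) = 0" using lam unfolding partitions_def by auto
    then show ?thesis by simp
  qed
  have lbound: "lam0 i \<le> m * (n - i + 1)" using lam i unfolding partitions_def by auto
  obtain y where y: "x (i+1) < y" "y \<notin> K" "card {k\<in>K. k < y} = lam0 i"
    using pick[OF finK z0, of "lam0 i"] r0 lmono lbound cK by auto
  have "Lo n m (x(i := y)) i" unfolding Lo_def
  proof (intro allI impI)
    fix a b t assume abt: "i \<le> a \<and> a < b \<and> b \<le> n+1 \<and> t \<le> m"
    show "(x(i := y)) a - (x(i := y)) b \<noteq> real t \<and> (x(i := y)) b < (x(i := y)) a"
    proof (cases "a = i")
      case False
      then have "i+1 \<le> a" using abt by simp
      then show ?thesis using lo abt False unfolding Lo_def by auto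
    next
      case True
      have xb: "x b \<le> x (i+1)"
      proof (cases "b = i+1")
        case False then show ?thesis using lo abt True unfolding Lo_def by (auto intro: less_imp_le)
      qed simp
      have ne: "y - x b \<noteq> real t"
      proof (cases "t = 0")
        case True then show ?thesis using y xb by simp
      next
        case False
        have "key (b,t) \<in> K" unfolding K_def I_def using abt True False by auto
        then have "x b + real t \<in> K" unfolding key_def by simp
        then show ?thesis using y(2) by (metis add.commute diff_add_cancel)
      qed
      show ?thesis using True abt ne y(1) xb by auto
    qed
  qed
  moreover have "card (Sx n m (x(i := y)) i) = lam0 i" using y(3) cbelow setS by simp
  ultimately show ?thesis by blast
qed



lemma build:
  assumes lam: "lam0 \<in> partitions n m"
  shows "k \<le> n \<Longrightarrow> \<exists>x. Lo n m x (n+1-k) \<and> (\<forall>i'. n+1-k \<le> i' \<and> i' \<le> n+1 \<longrightarrow> card (Sx n m x i') = lam0 i')"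
proof (induction k)
  case 0
  have "lam0 (n+1) = 0" using lam unfolding partitions_def by auto
  moreover have "Sx n m (\<lambda>_. 0) (n+1) = {}" unfolding Sx_def by auto
  ultimately have "\<forall>i'. n+1 \<le> i' \<and> i' \<le> n+1 \<longrightarrow> card (Sx n m (\<lambda>_. 0) i') = lam0 i'" by auto
  moreover have "Lo n m (\<lambda>_. 0) (n+1)" unfolding Lo_def by auto
  ultimately show ?case by auto
next
  case (Suc k)
  then obtain x where x: "Lo n m x (n+1-k)" "\<forall>i'. n+1-k \<le> i' \<and> i' \<le> n+1 \<longrightarrow> card (Sx n m x i') = lam0 i'"
    by auto
  define i where "i = n - k"
  have i: "1 \<le> i" "i \<le> n" "i + 1 = n+1-k" "n+1 - Suc k = i" using Suc.prems unfolding i_def by auto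
  have cx: "card (Sx n m x (i+1)) = lam0 (i+1)" using x(2) i by auto
  obtain y where y: "Lo n m (x(i := y)) i" "card (Sx n m (x(i := y)) i) = lam0 i"
    using step[OF lam i(1,2) _ cx] x(1) i(3) by auto
  have "\<forall>i'. i \<le> i' \<and> i' \<le> n+1 \<longrightarrow> card (Sx n m (x(i := y)) i') = lam0 i'"
  proof (intro allI impI)
    fix i' assume ii: "i \<le> i' \<and> i' \<le> n+1"
    show "card (Sx n m (x(i := y)) i') = lam0 i'"
    proof (cases "i' = i")
      case True then show ?thesis using y by simp
    next
      case False
      then have "i < i'" using ii by simp
      then show ?thesis using Sx_upd[of i i' n m x y] x(2) ii i(3) by auto
    qed
  qed
  then show ?case using y i(4) by auto
qed

lemma surj:
  assumes lam: "lam0 \<in> partitions n m"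
  shows "\<exists>x\<in>G n m. lam n m x = lam0"
proof -
  obtain x where x: "Lo n m x 1" "\<forall>i'. 1 \<le> i' \<and> i' \<le> n+1 \<longrightarrow> card (Sx n m x i') = lam0 i'"
    using build[OF lam, of n] by auto
  define c where "c = (\<Sum>k=1..n+1. x k) / real (n+1)"
  define z where "z = (\<lambda>k. if k \<in> {1..n+1} then x k - c else 0)"
  have zd: "\<And>a b. a \<in> {1..n+1} \<Longrightarrow> b \<in> {1..n+1} \<Longrightarrow> z a - z b = x a - x b"
    unfolding z_def by simp
  have "(\<Sum>k=1..n+1. z k) = (\<Sum>k=1..n+1. x k - c)" unfolding z_def by (rule sum.cong) auto
  also have "\<dots> = (\<Sum>k=1..n+1. x k) - real (n+1) * c" by (simp add: sum_subtractf)
  also have "\<dots> = 0" unfolding c_def by simp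
  finally have zV: "z \<in> V n" unfolding V_def z_def by auto
  have "gen n m z" unfolding gen_def
  proof (intro allI impI)
    fix a b t assume abt: "1 \<le> a \<and> a < b \<and> b \<le> n+1 \<and> t \<le> m"
    then show "z a - z b \<noteq> real t" using zd[of a b] x(1) unfolding Lo_def by auto
  qed
  moreover have "\<forall>a b. 1 \<le> a \<and> a < b \<and> b \<le> n+1 \<longrightarrow> z b < z a"
  proof (intro allI impI)
    fix a b assume abt: "1 \<le> a \<and> a < b \<and> b \<le> n+1"
    then have "x b < x a" using x(1) unfolding Lo_def by blast
    then show "z b < z a" using zd[of a b] abt by auto
  qed
  ultimately have zG: "z \<in> G n m" using zV by (simp add: G_def complement_iff)
  have "\<And>i. i \<in> {1..n} \<Longrightarrow> Sx n m z i = Sx n m x i"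
  proof -
    fix i assume i: "i \<in> {1..n}"
    have "\<And>j. i < j \<Longrightarrow> j \<le> n+1 \<Longrightarrow> z i - z j = x i - x j"
      using i by (intro zd) auto
    then show "Sx n m z i = Sx n m x i"
      unfolding Sx_def by auto
  qed
  then have "lam n m z = lam0"
    using x(2) lam unfolding lam_def partitions_def by (auto intro!: ext)
  then show ?thesis using zG by blast
qed



lemma ip_zero: "ip n (\<lambda>_. 0) a = 0" unfolding ip_def by simp

lemma aff_sub:
  assumes "S \<subseteq> hyp n a k"
  shows "aff_hull S \<subseteq> hyp n a k"
proof
  fix z assume "z \<in> aff_hull S"
  then obtain F u where F: "finite F" "F \<noteq> {}" "F \<subseteq> S" "sum u F = 1"
    "z = (\<lambda>k. \<Sum>y\<in>F. u y * y k)" unfolding aff_hull_def by blast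
  have FH: "\<And>y. y \<in> F \<Longrightarrow> y \<in> V n \<and> ip n y a = k" using F(3) assms unfolding hyp_def by auto
  have out: "\<forall>i. i \<notin> {1..n+1} \<longrightarrow> z i = 0"
  proof (intro allI impI)
    fix i assume "i \<notin> {1..n+1}"
    then have "\<forall>y\<in>F. y i = 0" using FH unfolding V_def by blast
    then show "z i = 0" unfolding F(5) by (intro sum.neutral) simp
  qed
  have "(\<Sum>i=1..n+1. z i) = (\<Sum>y\<in>F. u y * (\<Sum>i=1..n+1. y i))"
    unfolding F(5) sum_distrib_left by (rule sum.swap)
  also have "\<dots> = 0" using FH unfolding V_def by simp
  finally have zV: "z \<in> V n" using out unfolding V_def by simp
  have "ip n z a = (\<Sum>y\<in>F. u y * ip n y a)"
    unfolding F(5) ip_def sum_distrib_left sum_distrib_right mult.assoc by (rule sum.swap)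
  also have "\<dots> = (\<Sum>y\<in>F. u y * k)" using FH by simp
  also have "\<dots> = k" using F(4) by (simp add: sum_distrib_right[symmetric])
  finally show "z \<in> hyp n a k" using zV unfolding hyp_def by simp
qed

lemma ev_sign:
  fixes e d :: real
  assumes "e \<noteq> 0"
  shows "eventually (\<lambda>s. (0 < e + s * d \<longleftrightarrow> 0 < e) \<and> e + s * d \<noteq> 0) (at_right 0)"
proof -
  have t: "((\<lambda>s. e + s * d) \<longlongrightarrow> e + 0 * d) (at_right 0)"
    by (intro tendsto_intros)
  show ?thesis
  proof (cases "0 < e")
    case True
    have "eventually (\<lambda>s. 0 < e + s * d) (at_right 0)" using order_tendstoD(1)[OF t, of 0] True by simp
    then show ?thesis by eventually_elim (use True in auto)
  next
    case False
    then have "e < 0" using assms by simp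
    have "eventually (\<lambda>s. e + s * d < 0) (at_right 0)" using order_tendstoD(2)[OF t, of 0] \<open>e < 0\<close> by simp
    then show ?thesis by eventually_elim (use False in auto)
  qed
qed

definition gv :: "nat \<Rightarrow> nat \<Rightarrow> nat \<Rightarrow> real" where
  "gv n i = (\<lambda>k. (if 1 \<le> k \<and> k \<le> i then 1 else 0) - (if k \<in> {1..n+1} then real i / real (n+1) else 0))"

lemma gv_out: "k \<notin> {1..n+1} \<Longrightarrow> i \<le> n \<Longrightarrow> gv n i k = 0"
  unfolding gv_def by auto

lemma gv_sum: "i \<le> n \<Longrightarrow> (\<Sum>k=1..n+1. gv n i k) = 0"
proof -
  assume i: "i \<le> n"
  have "(\<Sum>k=1..n+1. gv n i k) = (\<Sum>k=1..n+1. (if 1 \<le> k \<and> k \<le> i then 1 else 0)) - (\<Sum>k=1..n+1. real i / real (n+1))"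
    unfolding gv_def by (simp add: sum_subtractf)
  also have "(\<Sum>k=1..n+1. (if 1 \<le> k \<and> k \<le> i then 1 else 0::real)) = real (card {1..i})"
  proof -
    have "{k\<in>{1..n+1}. 1 \<le> k \<and> k \<le> i} = {1..i}" using i by auto
    have "(\<Sum>k=1..n+1. (if 1 \<le> k \<and> k \<le> i then 1 else 0::real)) = (\<Sum>k\<in>{k\<in>{1..n+1}. 1 \<le> k \<and> k \<le> i}. 1)"
      by (rule sum.inter_filter[symmetric]) simp
    also have "\<dots> = (\<Sum>k\<in>{1..i}. 1)" using \<open>{k\<in>{1..n+1}. 1 \<le> k \<and> k \<le> i} = {1..i}\<close> by simp
    finally show ?thesis by simp
  qed
  finally show ?thesis by simp
qed

lemma gv_diff: "a \<in> {1..n+1} \<Longrightarrow> b \<in> {1..n+1} \<Longrightarrow>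
   gv n i a - gv n i b = (if a \<le> i then 1 else 0) - (if b \<le> i then 1 else 0)"
  unfolding gv_def by auto

lemma lin_V:
  assumes "u \<in> V n" "v \<in> V n"
  shows "(\<lambda>k. u k + s * v k) \<in> V n"
proof -
  have "(\<Sum>k=1..n+1. u k + s * v k) = (\<Sum>k=1..n+1. u k) + s * (\<Sum>k=1..n+1. v k)"
    by (simp only: sum.distrib flip: sum_distrib_left)
  then show ?thesis using assms unfolding V_def by auto
qed

lemma gv_V: "i \<le> n \<Longrightarrow> gv n i \<in> V n"
  unfolding V_def using gv_out gv_sum by auto

definition trip :: "nat \<Rightarrow> nat \<Rightarrow> (nat \<times> nat \<times> nat) set" where
  "trip n m = {(a,b,t). 1 \<le> a \<and> a < b \<and> b \<le> n+1 \<and> t \<le> m}"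

lemma trip_fin: "finite (trip n m)"
proof (rule finite_subset)
  show "trip n m \<subseteq> {..n+1} \<times> {..n+1} \<times> {..m}" unfolding trip_def by auto
qed simp

lemma closure_pt:
  assumes x: "x \<in> G n m" and i: "1 \<le> i" "i \<le> n" and uV: "u \<in> V n" and ui: "u i - u (i+1) = real m"
    and xi: "real m < x i - x (i+1)"
    and oth: "\<forall>(a,b,t) \<in> trip n m. (a,b) \<noteq> (i,i+1) \<longrightarrow>
         u a - u b \<noteq> real t \<and> (real t < u a - u b \<longleftrightarrow> real t < x a - x b)"
  shows "u \<in> closure (comp n m x)"
proof -
  define w where "w = (\<lambda>s::real. \<lambda>k. u k + s * gv n i k)"
  have xc: "x \<in> complement n m" using x by (simp add: G_def)
  have ev: "eventually (\<lambda>s. \<forall>p\<in>trip n m. case p of (a,b,t) \<Rightarrow>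
       w s a - w s b \<noteq> real t \<and> (real t < w s a - w s b \<longleftrightarrow> real t < x a - x b)) (at_right 0)"
  proof (rule eventually_ball_finite[OF trip_fin], rule ballI)
    fix p assume p: "p \<in> trip n m"
    obtain a b t where abt: "p = (a,b,t)" "1 \<le> a" "a < b" "b \<le> n+1" "t \<le> m"
      using p unfolding trip_def by auto
    have wd: "\<And>s. w s a - w s b - real t = (u a - u b - real t) + s * (gv n i a - gv n i b)"
      unfolding w_def by (simp add: algebra_simps)
    show "eventually (\<lambda>s. case p of (a,b,t) \<Rightarrow>
       w s a - w s b \<noteq> real t \<and> (real t < w s a - w s b \<longleftrightarrow> real t < x a - x b)) (at_right 0)"
    proof (cases "(a,b) = (i,i+1)")
      case True
      then have ab: "a = i" "b = i+1" by auto
      have gd: "gv n i a - gv n i b = 1" using gv_diff[of a n b i] abt ab by simp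
      have xt: "real t < x a - x b" using xi abt ab by simp
      show ?thesis using eventually_at_right_less[of "0::real"]
      proof eventually_elim
        case (elim s)
        have "w s a - w s b - real t = (real m - real t) + s" using wd[of s] gd ui ab by simp
        then have "0 < w s a - w s b - real t" using elim abt by simp
        then show ?case using abt xt by simp
      qed
    next
      case False
      have o: "u a - u b \<noteq> real t" "(real t < u a - u b \<longleftrightarrow> real t < x a - x b)"
        using oth p abt False by auto
      then have "u a - u b - real t \<noteq> 0" by simp
      from ev_sign[OF this, of "gv n i a - gv n i b"]
      show ?thesis
      proof eventually_elim
        case (elim s)
        then show ?case using wd[of s] o abt by auto
      qed
    qed
  qed
  have ev2: "eventually (\<lambda>s. w s \<in> comp n m x) (at_right 0)"
    using ev
  proof eventually_elim
    case (elim s)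
    have wV: "w s \<in> V n" unfolding w_def by (rule lin_V[OF uV gv_V]) (use i in simp)
    have "gen n m (w s)" unfolding gen_def using elim unfolding trip_def by fastforce
    moreover have "same n m x (w s)" unfolding same_def using elim unfolding trip_def by fastforce
    ultimately show ?case using comp_char[OF xc] wV by (simp add: complement_iff)
  qed
  have cw: "continuous_on UNIV w" unfolding w_def
    by (intro continuous_on_coordinatewise_then_product continuous_intros)
  then have "isCont w 0" using continuous_on_eq_continuous_at by blast
  then have "(w \<longlongrightarrow> w 0) (at 0)" by (simp add: isCont_def)
  then have "(w \<longlongrightarrow> w 0) (at_right 0)" by (rule tendsto_mono[OF at_le, rotated]) simp
  moreover have "w 0 = u" unfolding w_def by simp
  ultimately have tw: "(w \<longlongrightarrow> u) (at_right 0)" by simp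
  have evc: "eventually (\<lambda>s. w s \<in> closure (comp n m x)) (at_right 0)"
    using ev2 by (rule eventually_mono) (rule subsetD[OF closure_subset])
  show ?thesis
    by (rule Lim_in_closed_set[OF closed_closure evc trivial_limit_at_right_real tw])
qed



lemma ip_simple: "1 \<le> i \<Longrightarrow> i \<le> n \<Longrightarrow> ip n v (simple_root i) = v i - v (i+1)"
  unfolding simple_root_def by (rule ip_alpha) auto

lemma sum_eps: "j \<in> {1..n+1} \<Longrightarrow> (\<Sum>k=1..n+1. c * eps j k) = c"
  unfolding eps_def by (simp add: if_distrib cong: if_cong)

lemma V_eps3:
  assumes "a \<in> {1..n+1}" "b \<in> {1..n+1}" "r \<in> {1..n+1}" "c1 + c2 + c3 = 0"
  shows "(\<lambda>k. c1 * eps a k + c2 * eps b k + c3 * eps r k) \<in> V n"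
proof -
  have "(\<Sum>k=1..n+1. c1 * eps a k + c2 * eps b k + c3 * eps r k) =
      (\<Sum>k=1..n+1. c1 * eps a k) + (\<Sum>k=1..n+1. c2 * eps b k) + (\<Sum>k=1..n+1. c3 * eps r k)"
    by (simp add: sum.distrib)
  also have "\<dots> = 0" using assms sum_eps by simp
  finally show ?thesis using assms unfolding V_def eps_def by auto
qed

lemma hyp_ident:
  assumes i: "1 \<le> i" "i \<le> n" and a: "a \<in> pos_roots n"
    and H: "hyp n a k = hyp n (simple_root i) (real m)"
  shows "(\<forall>y. ip n y a = y i - y (i+1)) \<and> k = real m"
proof -
  obtain p b where pb: "1 \<le> p" "p < b" "b \<le> n+1" "a = alpha p (b-1)" using a pos_roots_iff by blast
  have ipa: "\<And>y. ip n y a = y p - y b" using pb ip_alpha' by simp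
  define v0 where "v0 = (\<lambda>k. (real m / 2) * eps i k + (- real m / 2) * eps (i+1) k + 0 * eps i k)"
  define ur where "ur = (\<lambda>r k. (real m / 2 + 1) * eps i k + (- real m / 2 + 1) * eps (i+1) k + (-2) * eps r k)"
  have v0H: "v0 \<in> hyp n (simple_root i) (real m)"
    unfolding hyp_def using V_eps3[of i n "i+1" i "real m / 2" "- real m / 2" 0] i
    by (simp add: ip_simple v0_def eps_def)
  have urH: "ur r \<in> hyp n (simple_root i) (real m)" if r: "r \<in> {1..n+1}" "r \<noteq> i" "r \<noteq> i+1" for r
    unfolding hyp_def using V_eps3[of i n "i+1" r "real m / 2 + 1" "- real m / 2 + 1" "-2"] i r
    by (simp add: ip_simple ur_def eps_def)
  have k0: "v0 p - v0 b = k" using v0H H ipa unfolding hyp_def by auto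
  have kr: "ur r p - ur r b = k" if r: "r \<in> {1..n+1}" "r \<noteq> i" "r \<noteq> i+1" for r
    using urH[OF r] H ipa unfolding hyp_def by auto
  have key: "eps i p + eps (i+1) p - 2 * eps r p = eps i b + eps (i+1) b - 2 * eps r b"
    if r: "r \<in> {1..n+1}" "r \<noteq> i" "r \<noteq> i+1" for r
  proof -
    have "ur r p - ur r b = v0 p - v0 b" using kr[OF r] k0 by simp
    moreover have "\<And>j. ur r j - v0 j = eps i j + eps (i+1) j - 2 * eps r j"
      unfolding ur_def v0_def by (simp add: algebra_simps)
    ultimately have "ur r p - v0 p = ur r b - v0 b" by linarith
    then show ?thesis using \<open>\<And>j. ur r j - v0 j = eps i j + eps (i+1) j - 2 * eps r j\<close> by simp
  qed
  have pi: "p = i"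
  proof (rule ccontr)
    assume npi: "p \<noteq> i"
    show False
    proof (cases "p = i+1")
      case True
      then have "b \<in> {1..n+1}" "b \<noteq> i" "b \<noteq> i+1" using pb by auto
      from key[OF this] show False using True pb by (simp add: eps_def)
    next
      case False
      then have "p \<in> {1..n+1}" "p \<noteq> i" "p \<noteq> i+1" using pb npi by auto
      from key[OF this] have "(if b = i then 1 else 0) + (if b = i+1 then 1 else 0) = (-2::real)"
        using pb npi False by (simp add: eps_def)
      then show False by (cases "b = i"; cases "b = i+1") auto
    qed
  qed
  have bi: "b = i+1"
  proof (rule ccontr)
    assume "b \<noteq> i+1"
    then have "b \<in> {1..n+1}" "b \<noteq> i" "b \<noteq> i+1" using pb pi by auto
    from key[OF this] have "(if b = i+1 then 1 else 0) = (3::real)" using pi pb by (simp add: eps_def)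
    then show False by (cases "b = i+1") auto
  qed
  have "k = real m" using k0 pi bi unfolding v0_def eps_def by simp
  then show ?thesis using ipa pi bi by simp
qed



lemma aff_sup:
  assumes x: "x \<in> G n m" and i: "1 \<le> i" "i \<le> n" and xi: "real m < x i - x (i+1)"
  shows "hyp n (simple_root i) (real m) \<subseteq> aff_hull (hyp n (simple_root i) (real m) \<inter> closure (comp n m x))"
proof
  let ?H = "hyp n (simple_root i) (real m)"
  let ?S = "?H \<inter> closure (comp n m x)"
  fix h assume hH: "h \<in> ?H"
  have hV: "h \<in> V n" and hi: "h i - h (i+1) = real m" using hH i unfolding hyp_def by (auto simp: ip_simple)
  have xc: "x \<in> complement n m" using x by (simp add: G_def)
  have xV: "x \<in> V n" using xc by (simp add: complement_iff)
  define c where "c = x i - x (i+1) - real m"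
  have c0: "0 < c" using xi unfolding c_def by simp
  define z0 where "z0 = (\<lambda>k. x k + (- c) * gv n i k)"
  have z0V: "z0 \<in> V n" unfolding z0_def by (rule lin_V[OF xV gv_V]) (use i in simp)
  have z0d: "\<And>a b. a \<in> {1..n+1} \<Longrightarrow> b \<in> {1..n+1} \<Longrightarrow>
      z0 a - z0 b = x a - x b - c * ((if a \<le> i then 1 else 0) - (if b \<le> i then 1 else 0))"
  proof -
    fix a b assume ab: "a \<in> {1..n+1}" "b \<in> {1..n+1}"
    have "z0 a - z0 b = x a - x b - c * (gv n i a - gv n i b)" unfolding z0_def by (simp add: algebra_simps)
    then show "z0 a - z0 b = x a - x b - c * ((if a \<le> i then 1 else 0) - (if b \<le> i then 1 else 0))"
      using gv_diff[OF ab, of i] by simp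
  qed
  have z0i: "z0 i - z0 (i+1) = real m" using z0d[of i "i+1"] i unfolding c_def by simp
  have z0H: "z0 \<in> ?H" using z0V z0i i unfolding hyp_def by (simp add: ip_simple)
  have z0oth: "\<forall>(a,b,t) \<in> trip n m. (a,b) \<noteq> (i,i+1) \<longrightarrow>
         z0 a - z0 b \<noteq> real t \<and> (real t < z0 a - z0 b \<longleftrightarrow> real t < x a - x b)"
  proof (intro ballI)
    fix p assume p: "p \<in> trip n m"
    obtain a b t where abt: "p = (a,b,t)" "1 \<le> a" "a < b" "b \<le> n+1" "t \<le> m"
      using p unfolding trip_def by auto
    have gx: "x a - x b \<noteq> real t" using G_gen[OF x abt(2,3,4,5)] .
    have "(a,b) \<noteq> (i,i+1) \<longrightarrow> z0 a - z0 b \<noteq> real t \<and> (real t < z0 a - z0 b \<longleftrightarrow> real t < x a - x b)"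
    proof
      assume nab: "(a,b) \<noteq> (i,i+1)"
      have zab: "z0 a - z0 b = x a - x b - c * ((if a \<le> i then 1 else 0) - (if b \<le> i then 1 else 0))"
        using z0d abt by simp
      show "z0 a - z0 b \<noteq> real t \<and> (real t < z0 a - z0 b \<longleftrightarrow> real t < x a - x b)"
      proof (cases "a \<le> i \<and> i < b")
        case True
        have xa: "x i \<le> x a"
        proof (cases "a = i")
          case False then show ?thesis using G_pos[OF x abt(2), of i] True i by simp
        qed simp
        have xb: "x b \<le> x (i+1)"
        proof (cases "b = i+1")
          case False then show ?thesis using G_pos[OF x _ _ abt(4), of "i+1"] True i by simp
        qed simp
        have strict: "x i < x a \<or> x b < x (i+1)"
        proof (cases "a = i")
          case True
          then have "b \<noteq> i+1" using nab by simp
          then have "i+1 < b" using \<open>a \<le> i \<and> i < b\<close> by simp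
          then show ?thesis using G_pos[OF x _ _ abt(4), of "i+1"] i by simp
        next
          case False
          then have "a < i" using \<open>a \<le> i \<and> i < b\<close> by simp
          then show ?thesis using G_pos[OF x abt(2), of i] i by simp
        qed
        have "x i - x (i+1) < x a - x b" using xa xb strict by linarith
        then have "real m < z0 a - z0 b" "real m < x a - x b" using zab True xi unfolding c_def by auto
        then show ?thesis using abt(5) by auto
      next
        case False
        then have "z0 a - z0 b = x a - x b" using zab abt(3) by auto
        then show ?thesis using gx by simp
      qed
    qed
    then show "case p of (a,b,t) \<Rightarrow> (a,b) \<noteq> (i,i+1) \<longrightarrow>
         z0 a - z0 b \<noteq> real t \<and> (real t < z0 a - z0 b \<longleftrightarrow> real t < x a - x b)" using abt(1) by simp
  qed
  have z0cl: "z0 \<in> closure (comp n m x)" by (rule closure_pt[OF x i z0V z0i xi z0oth])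
  show "h \<in> aff_hull ?S"
  proof (cases "h = z0")
    case True
    have "h = (\<lambda>k. \<Sum>y\<in>{z0}. (\<lambda>_. 1::real) y * y k)" using True by simp
    then show ?thesis unfolding aff_hull_def using z0H z0cl by (intro CollectI exI[of _ "{z0}"] exI[of _ "\<lambda>_. 1::real"]) auto
  next
    case False
    define u where "u = (\<lambda>d::real. \<lambda>k. z0 k + d * (h k - z0 k))"
    have hz: "(\<lambda>k. h k + (-1) * z0 k) \<in> V n" by (rule lin_V[OF hV z0V])
    have uV: "\<And>d. u d \<in> V n" unfolding u_def using lin_V[OF z0V hz] by (simp add: algebra_simps)
    have ui: "\<And>d. u d i - u d (i+1) = real m" unfolding u_def using z0i hi by (simp add: algebra_simps)
    have ev: "eventually (\<lambda>d. 0 < d \<and> (\<forall>p \<in> trip n m. case p of (a,b,t) \<Rightarrow> (a,b) \<noteq> (i,i+1) \<longrightarrow>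
         u d a - u d b \<noteq> real t \<and> (real t < u d a - u d b \<longleftrightarrow> real t < x a - x b))) (at_right 0)"
    proof (rule eventually_conj[OF eventually_at_right_less], rule eventually_ball_finite[OF trip_fin], rule ballI)
      fix p assume p: "p \<in> trip n m"
      obtain a b t where abt: "p = (a,b,t)" "1 \<le> a" "a < b" "b \<le> n+1" "t \<le> m"
        using p unfolding trip_def by auto
      show "eventually (\<lambda>d. case p of (a,b,t) \<Rightarrow> (a,b) \<noteq> (i,i+1) \<longrightarrow>
         u d a - u d b \<noteq> real t \<and> (real t < u d a - u d b \<longleftrightarrow> real t < x a - x b)) (at_right 0)"
      proof (cases "(a,b) = (i,i+1)")
        case True
        then show ?thesis using abt(1) by simp
      next
        case False
        have o: "z0 a - z0 b \<noteq> real t" "(real t < z0 a - z0 b \<longleftrightarrow> real t < x a - x b)"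
          using z0oth p abt False by auto
        have ud: "\<And>d. u d a - u d b - real t = (z0 a - z0 b - real t) + d * ((h a - z0 a) - (h b - z0 b))"
          unfolding u_def by (simp add: algebra_simps)
        have "z0 a - z0 b - real t \<noteq> 0" using o by simp
        from ev_sign[OF this, of "(h a - z0 a) - (h b - z0 b)"]
        show ?thesis
        proof (rule eventually_mono)
          fix d assume A: "(0 < z0 a - z0 b - real t + d * (h a - z0 a - (h b - z0 b))) = (0 < z0 a - z0 b - real t) \<and>
             z0 a - z0 b - real t + d * (h a - z0 a - (h b - z0 b)) \<noteq> 0"
          have "(0 < u d a - u d b - real t) = (0 < z0 a - z0 b - real t) \<and> u d a - u d b - real t \<noteq> 0"
            unfolding ud[of d] by (rule A)
          then show "case p of (a,b,t) \<Rightarrow> (a,b) \<noteq> (i,i+1) \<longrightarrow>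
             u d a - u d b \<noteq> real t \<and> (real t < u d a - u d b \<longleftrightarrow> real t < x a - x b)"
            using abt(1) o by auto
        qed
      qed
    qed
    obtain d where d: "0 < d" "\<forall>p \<in> trip n m. case p of (a,b,t) \<Rightarrow> (a,b) \<noteq> (i,i+1) \<longrightarrow>
         u d a - u d b \<noteq> real t \<and> (real t < u d a - u d b \<longleftrightarrow> real t < x a - x b)"
      using eventually_happens'[OF trivial_limit_at_right_real ev] by blast
    have ucl: "u d \<in> closure (comp n m x)" by (rule closure_pt[OF x i uV ui xi d(2)])
    have uH: "u d \<in> ?H" using uV[of d] ui[of d] i unfolding hyp_def by (simp add: ip_simple)
    have une: "u d \<noteq> z0"
    proof
      assume "u d = z0"
      then have "\<And>k. d * (h k - z0 k) = 0" unfolding u_def by (metis add_cancel_left_right)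
      then have "\<And>k. h k = z0 k" using d(1) by simp
      then show False using False by auto
    qed
    define wt where "wt = (\<lambda>y. if y = z0 then 1 - 1/d else 1/d)"
    have s1: "sum wt {z0, u d} = 1" using une unfolding wt_def by simp
    have hrep: "h = (\<lambda>k. \<Sum>y\<in>{z0, u d}. wt y * y k)"
    proof
      fix k
      have "(\<Sum>y\<in>{z0, u d}. wt y * y k) = (1 - 1/d) * z0 k + (1/d) * (z0 k + d * (h k - z0 k))"
        using une unfolding wt_def u_def by simp
      also have "\<dots> = h k" using d(1) by (simp add: field_simps)
      finally show "h k = (\<Sum>y\<in>{z0, u d}. wt y * y k)" by simp
    qed
    show ?thesis unfolding aff_hull_def
      using z0H z0cl uH ucl s1 hrep by (intro CollectI exI[of _ "{z0, u d}"] exI[of _ wt]) auto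
  qed
qed



lemma wall_iff:
  assumes x: "x \<in> G n m" and i: "1 \<le> i" "i \<le> n" and m: "1 \<le> m"
  shows "sep_wall n m (comp n m x) (hyp n (simple_root i) (real m)) \<longleftrightarrow> real m < x i - x (i+1)"
proof
  assume sw: "sep_wall n m (comp n m x) (hyp n (simple_root i) (real m))"
  then obtain a k where ak: "a \<in> pos_roots n" "hyp n (simple_root i) (real m) = hyp n a k"
      "\<forall>y \<in> comp n m x. (ip n y a - k) * (ip n (\<lambda>_. 0) a - k) < 0"
    unfolding sep_wall_def by blast
  have id: "(\<forall>y. ip n y a = y i - y (i+1)) \<and> k = real m"
    by (rule hyp_ident[OF i ak(1) ak(2)[symmetric]])
  have xc: "x \<in> complement n m" using x by (simp add: G_def)
  then have "x \<in> comp n m x" by simp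
  then have "(ip n x a - k) * (ip n (\<lambda>_. 0) a - k) < 0" using ak(3) by blast
  then have "(x i - x (i+1) - real m) * (0 - real m) < 0" using id by simp
  then have "0 < (x i - x (i+1) - real m) * real m" by simp
  moreover have "0 < real m" using m by simp
  ultimately have "0 < x i - x (i+1) - real m" by (simp add: zero_less_mult_iff)
  then show "real m < x i - x (i+1)" by simp
next
  assume xi: "real m < x i - x (i+1)"
  let ?H = "hyp n (simple_root i) (real m)"
  have sr: "simple_root i \<in> pos_roots n" unfolding simple_root_def pos_roots_def using i by blast
  have c1: "?H \<in> cat_arr n m" unfolding cat_arr_def using sr by blast
  have c2: "aff_hull (?H \<inter> closure (comp n m x)) = ?H"
  proof
    show "aff_hull (?H \<inter> closure (comp n m x)) \<subseteq> ?H" by (rule aff_sub) blast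
    show "?H \<subseteq> aff_hull (?H \<inter> closure (comp n m x))" by (rule aff_sup[OF x i xi])
  qed
  have c3: "\<forall>y \<in> comp n m x. (ip n y (simple_root i) - real m) * (ip n (\<lambda>_. 0) (simple_root i) - real m) < 0"
  proof
    fix y assume y: "y \<in> comp n m x"
    have "same n m x y" using comp_G[OF x y] by simp
    then have "real m < y i - y (i+1)" using xi i unfolding same_def by auto
    then show "(ip n y (simple_root i) - real m) * (ip n (\<lambda>_. 0) (simple_root i) - real m) < 0"
      using i m by (simp add: ip_simple mult_less_0_iff)
  qed
  show "sep_wall n m (comp n m x) ?H" unfolding sep_wall_def using c1 c2 c3 sr by blast
qed

lemma lam_full:
  assumes x: "x \<in> G n m" and i: "1 \<le> i" "i \<le> n" and m: "1 \<le> m"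
  shows "lam n m x i = (n - i + 1) * m \<longleftrightarrow> real m < x i - x (i+1)"
proof -
  define I where "I = {i+1..n+1} \<times> {1..m}"
  have cI: "card I = (n - i + 1) * m" unfolding I_def using i
    by (simp add: card_cartesian_product Suc_diff_le)
  have l: "lam n m x i = card (Sx n m x i)" using i unfolding lam_def by simp
  have sub: "Sx n m x i \<subseteq> I" unfolding I_def by (rule Sx_sub)
  show ?thesis
  proof
    assume "lam n m x i = (n - i + 1) * m"
    then have "Sx n m x i = I" using card_subset_eq[OF _ sub] cI l unfolding I_def by simp
    moreover have "(i+1, m) \<in> I" unfolding I_def using i m by simp
    ultimately have "(i+1, m) \<in> Sx n m x i" by simp
    then show "real m < x i - x (i+1)" unfolding Sx_def by simp
  next
    assume xi: "real m < x i - x (i+1)"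
    have "I \<subseteq> Sx n m x i"
    proof
      fix p assume "p \<in> I"
      then obtain j t where p: "p = (j,t)" "i+1 \<le> j" "j \<le> n+1" "1 \<le> t" "t \<le> m" unfolding I_def by auto
      have "x j \<le> x (i+1)"
      proof (cases "j = i+1")
        case False then show ?thesis using G_pos[OF x _ _ p(3), of "i+1"] p(2) by simp
      qed simp
      then have "real t < x i - x j" using xi p(5) by simp
      then show "p \<in> Sx n m x i" using p unfolding Sx_def by simp
    qed
    then have "Sx n m x i = I" using sub by blast
    then show "lam n m x i = (n - i + 1) * m" using l cI by simp
  qed
qed



theorem theorem1p3:
  fixes n m :: nat
  assumes "1 \<le> n" and "1 \<le> m"
  shows "\<exists>\<phi>. bij_betw \<phi> (dom_regions n m) (partitions n m) \<and>
    (\<forall>i \<in> {1..n}. \<forall>R \<in> dom_regions n m.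
       sep_wall n m R (hyp n (simple_root i) (real m)) \<longleftrightarrow> \<phi> R i = (n - i + 1) * m)"
proof -
  define rep where "rep = (\<lambda>R. SOME x. x \<in> G n m \<and> R = comp n m x)"
  define phi where "phi = (\<lambda>R. lam n m (rep R))"
  have rep: "rep R \<in> G n m \<and> R = comp n m (rep R)" if "R \<in> dom_regions n m" for R
  proof -
    have "\<exists>x. x \<in> G n m \<and> R = comp n m x" using that dom_regions_iff by blast
    then show ?thesis unfolding rep_def by (rule someI_ex)
  qed
  have phi_comp: "phi (comp n m x) = lam n m x" if x: "x \<in> G n m" for x
  proof -
    have R: "comp n m x \<in> dom_regions n m" using x dom_regions_iff by blast
    have r: "rep (comp n m x) \<in> G n m" "comp n m x = comp n m (rep (comp n m x))" using rep[OF R] by auto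
    have "rep (comp n m x) \<in> comp n m (rep (comp n m x))" using r(1) by (simp add: G_def)
    then have "rep (comp n m x) \<in> comp n m x" using r(2) by simp
    then have "same n m x (rep (comp n m x))" using comp_G[OF x] by blast
    then show ?thesis unfolding phi_def by (simp add: same_lam)
  qed
  have inj: "inj_on phi (dom_regions n m)"
  proof (rule inj_onI)
    fix R1 R2 assume R: "R1 \<in> dom_regions n m" "R2 \<in> dom_regions n m" "phi R1 = phi R2"
    have r1: "rep R1 \<in> G n m" "R1 = comp n m (rep R1)" using rep[OF R(1)] by auto
    have r2: "rep R2 \<in> G n m" "R2 = comp n m (rep R2)" using rep[OF R(2)] by auto
    have "same n m (rep R1) (rep R2)" using lam_inj[OF r1(1) r2(1)] R(3) unfolding phi_def by simp
    then show "R1 = R2" using comp_eq[OF r1(1) r2(1)] r1(2) r2(2) by simp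
  qed
  have img: "phi ` dom_regions n m = partitions n m"
  proof
    show "phi ` dom_regions n m \<subseteq> partitions n m"
      using rep lam_part unfolding phi_def by blast
    show "partitions n m \<subseteq> phi ` dom_regions n m"
    proof
      fix l assume "l \<in> partitions n m"
      then obtain x where x: "x \<in> G n m" "lam n m x = l" using surj by blast
      have "comp n m x \<in> dom_regions n m" using x dom_regions_iff by blast
      moreover have "phi (comp n m x) = l" using phi_comp[OF x(1)] x(2) by simp
      ultimately show "l \<in> phi ` dom_regions n m" by force
    qed
  qed
  have wall: "\<forall>i \<in> {1..n}. \<forall>R \<in> dom_regions n m.
       sep_wall n m R (hyp n (simple_root i) (real m)) \<longleftrightarrow> phi R i = (n - i + 1) * m"
  proof (intro ballI)
    fix i R assume i: "i \<in> {1..n}" and R: "R \<in> dom_regions n m"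
    have r: "rep R \<in> G n m" "R = comp n m (rep R)" using rep[OF R] by auto
    have i1: "1 \<le> i" "i \<le> n" using i by auto
    show "sep_wall n m R (hyp n (simple_root i) (real m)) \<longleftrightarrow> phi R i = (n - i + 1) * m"
      using wall_iff[OF r(1) i1 assms(2)] lam_full[OF r(1) i1 assms(2)] r(2) unfolding phi_def by simp
  qed
  show ?thesis using inj img wall unfolding bij_betw_def by blast
qed

end
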